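(* Let $N\ge1$, $\delta>0$, $0<s<1$, let $G$ be an Orlicz function with $\Delta_2$ constant $\mathfrak{c}$, and let $u\in L^G(\mathbb{R}^N)$. Let $\eta\in C^\infty(\mathbb{R}^N)$ with $0\le\eta\le1$, $\eta\equiv1$ on $B(0,1)$, $\mathrm{supp}(\eta)=\overline{B(0,2)}$, $\|\nabla\eta\|_\infty\le2$, and for $k\in\mathbb{N}$ set $\eta_k(x)=\eta(x/k)$ and $u_k=\eta_k u$. Then for every $k\in\mathbb{N}$, \begin{equation*} \Psi_{s,G,\delta}(u_k)\le\frac{\mathfrak{c}}{2}\Psi_{s,G,\delta}(u)+\frac{N\omega_N\mathfrak{c}^2}{2k(1-s)}\int_{\mathbb{R}^N}G\big(|u(x)|\,\delta^{1-s}\big)\,dx, \end{equation*} where $\omega_N$ denotes the surface measure of the unit sphere $\mathbb{S}^{N-1}$.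
   Context: An Orlicz function is a function $G:[0,\infty)\to[0,\infty)$ that is continuous, convex, increasing, with $G(0)=0$, satisfies the $\Delta_2$ condition $G(2t)\le \mathfrak{c}\,G(t)$ for all $t\ge0$ for some constant $\mathfrak{c}>2$ (the $\Delta_2$ constant), and $\lim_{t\to0^+}G(t)/t=0$. $L^G(\mathbb{R}^N)$ is the set of measurable $u$ with $\int_{\mathbb{R}^N}G(|u|)\,dx<\infty$. $\Psi_{s,G,\delta}(u)=\int_{\mathbb{R}^N}\int_{B(x,\delta)}G\big(\frac{|u(x)-u(y)|}{|x-y|^s}\big)\frac{dy\,dx}{|x-y|^N}$ (possibly $+\infty$). *)

theory Defs
  imports "HOL-Analysis.Analysis"
begin

definition orlicz :: "(real \<Rightarrow> real) \<Rightarrow> real \<Rightarrow> bool" where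
  "orlicz G c \<longleftrightarrow>
     (\<forall>t\<ge>0. G t \<ge> 0) \<and> continuous_on {0..} G \<and> convex_on {0..} G \<and>
     mono_on {0..} G \<and> G 0 = 0 \<and> c > 2 \<and> (\<forall>t\<ge>0. G (2 * t) \<le> c * G t) \<and>
     ((\<lambda>t. G t / t) \<longlongrightarrow> 0) (at_right 0)"

definition in_LG :: "(real \<Rightarrow> real) \<Rightarrow> ('a::euclidean_space \<Rightarrow> real) \<Rightarrow> bool" where
  "in_LG G u \<longleftrightarrow> u \<in> borel_measurable lebesgue \<and>
     (\<integral>\<^sup>+ x. ennreal (G \<bar>u x\<bar>) \<partial>lebesgue) < \<infinity>"

definition Psi :: "real \<Rightarrow> (real \<Rightarrow> real) \<Rightarrow> real \<Rightarrow> ('a::euclidean_space \<Rightarrow> real) \<Rightarrow> ennreal" where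
  "Psi s G \<delta> u = (\<integral>\<^sup>+ x. (\<integral>\<^sup>+ y. indicator (ball x \<delta>) y *
      ennreal (G (\<bar>u x - u y\<bar> / dist x y powr s) / dist x y ^ DIM('a)) \<partial>lebesgue) \<partial>lebesgue)"

definition dirderiv :: "'a::real_normed_vector \<Rightarrow> ('a \<Rightarrow> real) \<Rightarrow> 'a \<Rightarrow> real" where
  "dirderiv v f x = (THE d. ((\<lambda>t. f (x + t *\<^sub>R v)) has_real_derivative d) (at 0))"

fun iter_dirderiv :: "'a::real_normed_vector list \<Rightarrow> ('a \<Rightarrow> real) \<Rightarrow> 'a \<Rightarrow> real" where
  "iter_dirderiv [] f = f"
| "iter_dirderiv (v # vs) f = dirderiv v (iter_dirderiv vs f)"

text \<open>f is C^\<infinity> on the whole space: all iterated directional derivatives exist and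
  are continuous (equivalently all partial derivatives of all orders exist and are continuous).\<close>
definition smooth_fun :: "('a::real_normed_vector \<Rightarrow> real) \<Rightarrow> bool" where
  "smooth_fun f \<longleftrightarrow>
     (\<forall>vs v x. (\<lambda>t. iter_dirderiv vs f (x + t *\<^sub>R v)) differentiable (at 0)) \<and>
     (\<forall>vs. continuous_on UNIV (iter_dirderiv vs f))"

text \<open>Surface measure of the unit sphere S^{N-1}: N times the volume of the unit ball.\<close>
definition sphere_area :: "'a::euclidean_space itself \<Rightarrow> real" where
  "sphere_area _ = real DIM('a) * measure lebesgue (ball (0::'a) 1)"

end

theory Submission
  imports Defs
begin

lemma sigma_finite_lebesgue: "sigma_finite_measure (lebesgue :: 'a::euclidean_space measure)"
proof -
  obtain A where A: "countable A" "A \<subseteq> sets (lborel::'a measure)" "\<Union> A = space (lborel::'a measure)"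
      "\<forall>a\<in>A. emeasure lborel a \<noteq> \<infinity>"
    using sigma_finite_measure.sigma_finite_countable[OF sigma_finite_lborel] by blast
  show ?thesis
    unfolding sigma_finite_measure_def
  proof (intro exI[of _ A] conjI)
    show "A \<subseteq> sets lebesgue" using A(2) sets_completionI_sets by blast
    show "\<Union> A = space lebesgue" using A(3) by simp
    show "\<forall>a\<in>A. emeasure lebesgue a \<noteq> \<infinity>"
      using A(2,4) by (simp add: subset_eq)
  qed (use A in auto)
qed

lemma pair_sf_leb: "pair_sigma_finite (lebesgue :: 'a::euclidean_space measure) (lebesgue :: 'b::euclidean_space measure)"
  by (intro pair_sigma_finite.intro sigma_finite_lebesgue)

lemma pair_sf_lborel_leb: "pair_sigma_finite (lborel :: 'a::euclidean_space measure) (lebesgue :: 'b::euclidean_space measure)"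
  by (intro pair_sigma_finite.intro sigma_finite_lebesgue sigma_finite_lborel)

lemma orlicz_nonneg: "orlicz G c \<Longrightarrow> t \<ge> 0 \<Longrightarrow> G t \<ge> 0"
  unfolding orlicz_def by blast

lemma orlicz_mono: "orlicz G c \<Longrightarrow> 0 \<le> a \<Longrightarrow> a \<le> b \<Longrightarrow> G a \<le> G b"
  unfolding orlicz_def by (meson atLeast_iff mono_onD order_trans)

lemma orlicz_c: "orlicz G c \<Longrightarrow> c > 2"
  unfolding orlicz_def by blast

lemma orlicz_sum:
  assumes "orlicz G c" "a \<ge> 0" "b \<ge> 0"
  shows "G (a + b) \<le> c / 2 * (G a + G b)"
proof -
  have cv: "convex_on {0..} G" and d2: "\<forall>t\<ge>0. G (2 * t) \<le> c * G t"
    using assms(1) unfolding orlicz_def by auto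
  have "G (a + b) = G ((1 - 1/2) *\<^sub>R (2*a) + (1/2) *\<^sub>R (2*b))" by simp
  also have "\<dots> \<le> (1 - 1/2) * G (2*a) + (1/2) * G (2*b)"
    by (rule convex_onD[OF cv]) (use assms in auto)
  also have "\<dots> \<le> (1/2) * (c * G a) + (1/2) * (c * G b)"
    using d2 assms by (intro add_mono mult_left_mono) auto
  finally show ?thesis by (simp add: algebra_simps)
qed

lemma orlicz_scale:
  assumes "orlicz G c" "0 \<le> l" "l \<le> 1" "t \<ge> 0"
  shows "G (l * t) \<le> l * G t"
proof -
  have cv: "convex_on {0..} G" and g0: "G 0 = 0"
    using assms(1) unfolding orlicz_def by auto
  have "G (l * t) = G ((1 - l) *\<^sub>R 0 + l *\<^sub>R t)" by simp
  also have "\<dots> \<le> (1 - l) * G 0 + l * G t"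
    by (rule convex_onD[OF cv]) (use assms in auto)
  finally show ?thesis using g0 by simp
qed

lemma orlicz_meas:
  assumes "orlicz G c" "f \<in> borel_measurable M"
  shows "(\<lambda>x. G \<bar>f x\<bar>) \<in> borel_measurable M"
proof -
  have "continuous_on {0..} G" using assms(1) unfolding orlicz_def by auto
  then have "continuous_on UNIV (\<lambda>v::real. G \<bar>v\<bar>)"
    by (rule continuous_on_compose2[of _ _ _ abs]) (auto intro: continuous_intros)
  then have "(\<lambda>v::real. G \<bar>v\<bar>) \<in> borel_measurable borel"
    using borel_measurable_continuous_onI by blast
  from measurable_compose[OF assms(2) this] show ?thesis by (simp add: o_def)
qed

lemma eta_lip:
  fixes \<eta> :: "'a::euclidean_space \<Rightarrow> real"
  assumes "\<forall>x. \<exists>D. (GDERIV \<eta> x :> D) \<and> norm D \<le> 2"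
  shows "\<bar>\<eta> a - \<eta> b\<bar> \<le> 2 * dist a b"
proof -
  obtain D where D: "\<And>x. (GDERIV \<eta> x :> D x) \<and> norm (D x) \<le> 2"
    using assms by metis
  have "norm (\<eta> a - \<eta> b) \<le> 2 * norm (a - b)"
  proof (rule differentiable_bound[of UNIV \<eta> "\<lambda>x h. inner h (D x)"])
    fix x :: 'a
    show "(\<eta> has_derivative (\<lambda>h. inner h (D x))) (at x within UNIV)"
      using D[of x] unfolding gderiv_def by simp
    have "onorm (\<lambda>h. inner h (D x)) \<le> 2"
    proof (rule onorm_le)
      fix h :: 'a
      have "norm (inner h (D x)) \<le> norm h * norm (D x)"
        using Cauchy_Schwarz_ineq2 by simp
      also have "\<dots> \<le> 2 * norm h" using D[of x]
        by (simp add: mult.commute mult_left_mono)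
      finally show "norm (inner h (D x)) \<le> 2 * norm h" .
    qed
    then show "onorm (\<lambda>h. inner h (D x)) \<le> 2" .
  qed auto
  then show ?thesis by (simp add: dist_norm)
qed

lemma ball_emeasure:
  fixes y :: "'a::euclidean_space"
  assumes "r \<ge> 0"
  shows "emeasure lebesgue (ball y r) = ennreal (r ^ DIM('a) * measure lebesgue (ball (0::'a) 1))"
proof -
  have "emeasure lebesgue (ball (0::'a) 1) = ennreal (measure lebesgue (ball (0::'a) 1))"
    using emeasure_lborel_ball_finite[of "0::'a" 1]
    by (intro emeasure_eq_ennreal_measure) auto
  then show ?thesis using emeasure_lebesgue_ball_conv_unit_ball[OF assms, of y] assms
    by (simp add: ennreal_mult)
qed

lemma radial:
  fixes y :: "'a::euclidean_space"
  assumes b: "0 < b" "b < 1" and d: "\<delta> > 0"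
  shows "(\<integral>\<^sup>+x. indicator (ball y \<delta>) x * ennreal (dist x y powr (b - real DIM('a))) \<partial>lebesgue)
     \<le> ennreal (real DIM('a) * measure lebesgue (ball (0::'a) 1) * \<delta> powr b / b)"
proof -
  define N where "N = real DIM('a)"
  define a where "a = N - b"
  define V where "V = measure lebesgue (ball (0::'a) 1)"
  have N1: "N \<ge> 1" unfolding N_def using DIM_positive[where 'a='a] by linarith
  have a0: "a > 0" unfolding a_def using N1 b by simp
  have V0: "V \<ge> 0" unfolding V_def by simp
  define f where "f x = indicator (ball y \<delta>) x * dist x y powr (-a)" for x
  have f0: "f x \<ge> 0" for x unfolding f_def by simp
  have idm: "(\<lambda>x::'a. x) \<in> borel_measurable lebesgue"
    by (rule measurable_completion) simp
  have ballm: "ball y \<delta> \<in> sets lebesgue" by simp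
  have fm: "f \<in> borel_measurable lebesgue"
    unfolding f_def using idm ballm by measurable
  have 1: "indicator (ball y \<delta>) x * ennreal (dist x y powr (b - real DIM('a)))
      = (\<integral>\<^sup>+t. indicator {0<..<f x} t \<partial>lborel)" for x
  proof -
    have "(\<integral>\<^sup>+t. indicator {0<..<f x} t \<partial>lborel) = emeasure lborel {0<..<f x}"
      by (rule nn_integral_indicator) simp
    also have "\<dots> = ennreal (f x)" using f0[of x] by (simp add: emeasure_lborel_Ioo)
    finally show ?thesis by (simp add: f_def a_def N_def indicator_def)
  qed
  have meas2: "(\<lambda>(t, x). indicator {0<..<f x} t :: ennreal) \<in> borel_measurable (lborel \<Otimes>\<^sub>M lebesgue)"
  proof -
    have "(\<lambda>(t, x). indicator {0<..<f x} t :: ennreal) = (\<lambda>p. if 0 < fst p \<and> fst p < f (snd p) then 1 else 0)"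
      by (auto simp: indicator_def fun_eq_iff)
    also have "\<dots> \<in> borel_measurable (lborel \<Otimes>\<^sub>M lebesgue)"
      using fm by measurable
    finally show ?thesis .
  qed
  have "(\<integral>\<^sup>+x. indicator (ball y \<delta>) x * ennreal (dist x y powr (b - real DIM('a))) \<partial>lebesgue)
     = (\<integral>\<^sup>+x. \<integral>\<^sup>+t. indicator {0<..<f x} t \<partial>lborel \<partial>lebesgue)"
    using 1 by simp
  also have "\<dots> = (\<integral>\<^sup>+t. \<integral>\<^sup>+x. indicator {0<..<f x} t \<partial>lebesgue \<partial>lborel)"
    using pair_sigma_finite.Fubini'[OF pair_sf_lborel_leb meas2] by simp
  also have "\<dots> \<le> (\<integral>\<^sup>+t. ennreal (indicator {0<..} t * (min \<delta> (t powr (-1/a)) ^ DIM('a) * V)) \<partial>lborel)"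
  proof (rule nn_integral_mono)
    fix t :: real
    show "(\<integral>\<^sup>+x. indicator {0<..<f x} t \<partial>lebesgue) \<le> ennreal (indicator {0<..} t * (min \<delta> (t powr (-1/a)) ^ DIM('a) * V))"
    proof (cases "t > 0")
      case False
      then show ?thesis by (simp add: indicator_def)
    next
      case True
      define r where "r = min \<delta> (t powr (-1/a))"
      have r0: "r \<ge> 0" unfolding r_def using d by simp
      have "(\<integral>\<^sup>+x. indicator {0<..<f x} t \<partial>lebesgue) \<le> (\<integral>\<^sup>+x. indicator (ball y r) x \<partial>lebesgue)"
      proof (rule nn_integral_mono)
        fix x
        show "(indicator {0<..<f x} t :: ennreal) \<le> indicator (ball y r) x"
        proof (cases "t < f x")
          case False then show ?thesis by (simp add: indicator_def)
        next
          case tf: True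
          have xb: "x \<in> ball y \<delta>" 
          proof (rule ccontr)
            assume "x \<notin> ball y \<delta>"
            then have "f x = 0" unfolding f_def by simp
            then show False using tf True by simp
          qed
          have fx: "f x = dist x y powr (-a)" using xb unfolding f_def by simp
          have dpos: "dist x y > 0" using tf True fx by (auto simp: dist_commute)
          have "(dist x y powr (-a)) powr (-1/a) < t powr (-1/a)"
            using tf True fx a0 by (intro powr_less_mono2_neg) auto
          also have "(dist x y powr (-a)) powr (-1/a) = dist x y"
            using a0 dpos by (simp add: powr_powr)
          finally have "dist x y < t powr (-1/a)" .
          then have "x \<in> ball y r" using xb unfolding r_def by (auto simp: dist_commute)
          then show ?thesis by (simp add: indicator_def)
        qed
      qed
      also have "\<dots> = emeasure lebesgue (ball y r)" by (rule nn_integral_indicator) simp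
      also have "\<dots> = ennreal (r ^ DIM('a) * V)" unfolding V_def by (rule ball_emeasure[OF r0])
      finally show ?thesis using True unfolding r_def by simp
    qed
  qed
  also have "\<dots> \<le> (\<integral>\<^sup>+t. ennreal V * (ennreal (indicator {0..\<delta> powr (-a)} t * \<delta> ^ DIM('a))
        + ennreal (indicator {\<delta> powr (-a)..} t * t powr (-N/a))) \<partial>lborel)"
  proof (rule nn_integral_mono)
    fix t :: real
    define T where "T = \<delta> powr (-a)"
    have T0: "T > 0" unfolding T_def using d by simp
    have "indicator {0<..} t * (min \<delta> (t powr (-1/a)) ^ DIM('a) * V)
       \<le> V * (indicator {0..T} t * \<delta> ^ DIM('a) + indicator {T..} t * t powr (-N/a))"
    proof (cases "t > 0")
      case False
      then have "t \<notin> {T..}" using T0 by auto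
      with False V0 d show ?thesis by (simp add: indicator_def)
    next
      case True
      show ?thesis
      proof (cases "t \<le> T")
        case tT: True
        have "min \<delta> (t powr (-1/a)) ^ DIM('a) \<le> \<delta> ^ DIM('a)"
          using d by (intro power_mono) auto
        moreover have "0 \<le> indicator {T..} t * t powr (-N/a)" by simp
        ultimately show ?thesis using True tT V0
          by (simp add: indicator_def mult.commute mult_left_mono add_increasing2)
      next
        case tT: False
        have "min \<delta> (t powr (-1/a)) ^ DIM('a) \<le> (t powr (-1/a)) ^ DIM('a)"
          using d by (intro power_mono) auto
        also have "\<dots> = t powr (-N/a)"
          using True by (simp add: N_def powr_realpow[symmetric] powr_powr)
        finally show ?thesis using True tT V0 T0
          by (simp add: indicator_def mult.commute mult_left_mono)
      qed
    qed
    note ineq = this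
    show "ennreal (indicator {0<..} t * (min \<delta> (t powr (-1/a)) ^ DIM('a) * V))
      \<le> ennreal V * (ennreal (indicator {0..\<delta> powr (-a)} t * \<delta> ^ DIM('a))
        + ennreal (indicator {\<delta> powr (-a)..} t * t powr (-N/a)))"
    proof -
      have A0: "0 \<le> indicator {0..T} t * \<delta> ^ DIM('a)" using d by simp
      have B0: "0 \<le> indicator {T..} t * t powr (-N/a)" by simp
      have "ennreal V * (ennreal (indicator {0..T} t * \<delta> ^ DIM('a)) + ennreal (indicator {T..} t * t powr (-N/a)))
         = ennreal (V * (indicator {0..T} t * \<delta> ^ DIM('a) + indicator {T..} t * t powr (-N/a)))"
        using A0 B0 V0 by (simp add: ennreal_plus[symmetric] ennreal_mult[symmetric] del: ennreal_plus)
      with ineq show ?thesis unfolding T_def[symmetric] by (simp add: ennreal_leI)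
    qed
  qed
  also have "\<dots> = ennreal V * ((\<integral>\<^sup>+t. ennreal (indicator {0..\<delta> powr (-a)} t * \<delta> ^ DIM('a)) \<partial>lborel)
        + (\<integral>\<^sup>+t. ennreal (indicator {\<delta> powr (-a)..} t * t powr (-N/a)) \<partial>lborel))"
    by (subst nn_integral_cmult) (auto intro!: nn_integral_add arg_cong2[where f="(*)"])
  also have "(\<integral>\<^sup>+t. ennreal (indicator {0..\<delta> powr (-a)} t * \<delta> ^ DIM('a)) \<partial>lborel)
      = ennreal (\<delta> powr (-a) * \<delta> ^ DIM('a))"
    using d by (intro nn_integral_has_integral_lebesgue) (auto intro: has_integral_const_real[THEN has_integral_eq_rhs])
  also have "(\<integral>\<^sup>+t. ennreal (indicator {\<delta> powr (-a)..} t * t powr (-N/a)) \<partial>lborel)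
      = ennreal (-((\<delta> powr (-a)) powr (-N/a + 1)) / (-N/a + 1))"
  proof (intro nn_integral_has_integral_lebesgue has_integral_powr_to_inf)
    show "- N / a < -1" using a0 b unfolding a_def by (simp add: field_simps)
  qed (use d in auto)
  also have "ennreal V * (ennreal (\<delta> powr (-a) * \<delta> ^ DIM('a)) + ennreal (-((\<delta> powr (-a)) powr (-N/a + 1)) / (-N/a + 1)))
     = ennreal (V * (\<delta> powr (-a) * \<delta> ^ DIM('a) + (-((\<delta> powr (-a)) powr (-N/a + 1)) / (-N/a + 1))))"
  proof -
    have "- N / a < -1" using a0 b unfolding a_def by (simp add: field_simps)
    then have "0 \<le> (-((\<delta> powr (-a)) powr (-N/a + 1)) / (-N/a + 1))"
      by (intro divide_nonpos_neg) auto
    moreover have "0 \<le> \<delta> powr (-a) * \<delta> ^ DIM('a)" using d by simp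
    ultimately show ?thesis using V0
      by (metis ennreal_plus ennreal_mult add_nonneg_nonneg)
  qed
  also have "V * (\<delta> powr (-a) * \<delta> ^ DIM('a) + (-((\<delta> powr (-a)) powr (-N/a + 1)) / (-N/a + 1)))
      = N * V * \<delta> powr b / b"
  proof -
    have e1: "\<delta> powr (-a) * \<delta> ^ DIM('a) = \<delta> powr b"
      using d by (simp add: powr_realpow[symmetric] powr_add[symmetric] a_def N_def)
    have e2: "(\<delta> powr (-a)) powr (-N/a + 1) = \<delta> powr b"
    proof -
      have "-a * (-N/a + 1) = b" using a0 by (simp add: a_def field_simps)
      then show ?thesis by (simp add: powr_powr)
    qed
    have e3: "-N/a + 1 = - b / a" using a0 by (simp add: a_def field_simps)
    have "V * (\<delta> powr b + (- (\<delta> powr b)) / (- b / a)) = V * \<delta> powr b * (1 + a / b)"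
      using b a0 by (simp add: field_simps)
    also have "\<dots> = N * V * \<delta> powr b / b" using b by (simp add: a_def field_simps)
    finally show ?thesis using e1 e2 e3 by simp
  qed
  finally show ?thesis unfolding N_def V_def .
qed
lemma pw_real:
  assumes G: "orlicz G c" and d: "0 < d" "d < \<delta>" and s: "0 < s" "s < 1" and k: "k \<ge> 1"
    and e: "0 \<le> e" "e \<le> 1" and ee: "\<bar>e - e'\<bar> \<le> 2 * d / k" and n: "n \<ge> 1"
  shows "G (\<bar>e * p - e' * q\<bar> / d powr s) / d ^ n
     \<le> c / 2 * (G (\<bar>p - q\<bar> / d powr s) / d ^ n)
       + c^2 / (2 * k) * (\<delta> powr (-(1 - s)) * G (\<bar>q\<bar> * \<delta> powr (1 - s)) * d powr ((1 - s) - real n))"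
proof -
  define A where "A = \<bar>p - q\<bar>"
  define w where "w = \<bar>q\<bar>"
  define b where "b = 1 - s"
  have b: "0 < b" "b < 1" using s unfolding b_def by auto
  have c2: "c > 2" using orlicz_c[OF G] .
  have ds: "d powr s > 0" using d by simp
  have dpb: "d / d powr s = d powr b"
    using d by (simp add: b_def powr_diff)
  have k0: "k > 0" using k by simp
  have "\<bar>e * p - e' * q\<bar> = \<bar>e * (p - q) + (e - e') * q\<bar>" by (simp add: algebra_simps)
  also have "\<dots> \<le> e * A + \<bar>e - e'\<bar> * w"
    using e by (intro order_trans[OF abs_triangle_ineq]) (simp add: A_def w_def abs_mult)
  also have "\<dots> \<le> A + 2 * d / k * w"
    using e ee by (intro add_mono mult_right_mono) (auto simp: A_def w_def mult_left_le_one_le)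
  finally have 1: "\<bar>e * p - e' * q\<bar> \<le> A + 2 * d / k * w" .
  have "\<bar>e * p - e' * q\<bar> / d powr s \<le> A / d powr s + 2 * w * d powr b / k"
  proof -
    have "\<bar>e * p - e' * q\<bar> / d powr s \<le> (A + 2 * d / k * w) / d powr s"
      using 1 ds by (simp add: divide_right_mono)
    also have "\<dots> = A / d powr s + 2 * w * (d / d powr s) / k"
      using ds k0 by (simp add: add_divide_distrib mult_ac)
    finally show ?thesis using dpb by simp
  qed
  then have "G (\<bar>e * p - e' * q\<bar> / d powr s) \<le> G (A / d powr s + 2 * w * d powr b / k)"
    by (intro orlicz_mono[OF G]) auto
  also have "\<dots> \<le> c / 2 * (G (A / d powr s) + G (2 * w * d powr b / k))"
    using k0 ds by (intro orlicz_sum[OF G]) (auto simp: A_def w_def)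
  also have "G (2 * w * d powr b / k) \<le> (d powr b / (\<delta> powr b * k)) * (c * G (w * \<delta> powr b))"
  proof -
    define l where "l = d powr b / (\<delta> powr b * k)"
    have l0: "0 \<le> l" unfolding l_def using k0 by simp
    have "d powr b \<le> \<delta> powr b" using d b by (intro powr_mono2) auto
    have "d powr b \<le> \<delta> powr b * k"
    proof -
      have "\<delta> powr b \<le> \<delta> powr b * k" using k d by (simp add: mult_le_cancel_left1)
      then show ?thesis using \<open>d powr b \<le> \<delta> powr b\<close> by linarith
    qed
    then have l1: "l \<le> 1" unfolding l_def using k d by simp
    have "2 * w * d powr b / k = l * (2 * (w * \<delta> powr b))"
      unfolding l_def using d k0 by (simp add: field_simps)
    then have "G (2 * w * d powr b / k) = G (l * (2 * (w * \<delta> powr b)))" by simp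
    also have "\<dots> \<le> l * G (2 * (w * \<delta> powr b))"
      using l0 l1 by (intro orlicz_scale[OF G]) (auto simp: w_def)
    also have "\<dots> \<le> l * (c * G (w * \<delta> powr b))"
    proof -
      have "\<forall>t\<ge>0. G (2 * t) \<le> c * G t" using G unfolding orlicz_def by blast
      then have "G (2 * (w * \<delta> powr b)) \<le> c * G (w * \<delta> powr b)" by (simp add: w_def)
      then show ?thesis using l0 by (rule mult_left_mono)
    qed
    finally show ?thesis unfolding l_def .
  qed
  then have "c / 2 * (G (A / d powr s) + G (2 * w * d powr b / k))
      \<le> c / 2 * (G (A / d powr s) + (d powr b / (\<delta> powr b * k)) * (c * G (w * \<delta> powr b)))"
    using c2 by (intro mult_left_mono add_left_mono) auto
  finally have 2: "G (\<bar>e * p - e' * q\<bar> / d powr s) \<le> c / 2 * (G (A / d powr s) + (d powr b / (\<delta> powr b * k)) * (c * G (w * \<delta> powr b)))" .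
  have dn: "d ^ n > 0" using d by simp
  have "G (\<bar>e * p - e' * q\<bar> / d powr s) / d ^ n \<le> c / 2 * (G (A / d powr s) + (d powr b / (\<delta> powr b * k)) * (c * G (w * \<delta> powr b))) / d ^ n"
    by (rule divide_right_mono[OF 2]) (use dn in simp)
  also have "\<dots> = c / 2 * (G (A / d powr s) / d ^ n) + c^2 / (2 * k) * (\<delta> powr (-b) * G (w * \<delta> powr b) * (d powr b / d ^ n))"
  proof -
    have X: "\<delta> powr b > 0" using d by simp
    have "\<And>X GA db Gw dn. (dn::real) > 0 \<Longrightarrow> X > 0 \<Longrightarrow> c / 2 * (GA + (db / (X * k)) * (c * Gw)) / dn = c / 2 * (GA / dn) + c * c / (2 * k) * (inverse X * Gw * (db / dn))"
      using k0 by (simp add: field_simps)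
    from this[OF dn X] show ?thesis by (simp add: power2_eq_square powr_minus)
  qed
  also have "d powr b / d ^ n = d powr (b - real n)"
    using d by (simp add: powr_diff powr_realpow)
  finally show ?thesis unfolding A_def w_def b_def .
qed

lemma idm: "(\<lambda>x::'a::euclidean_space. x) \<in> borel_measurable lebesgue"
  by (rule measurable_completion) simp

lemma F_meas:
  fixes v :: "'a::euclidean_space \<Rightarrow> real"
  assumes G: "orlicz G c" and v: "v \<in> borel_measurable lebesgue"
  shows "(\<lambda>(x,y). indicator (ball x \<delta>) y * ennreal (G (\<bar>v x - v y\<bar> / dist x y powr s) / dist x y ^ DIM('a)))
     \<in> borel_measurable (lebesgue \<Otimes>\<^sub>M (lebesgue::'a measure))"
proof -
  note idm[measurable]
  have m1: "(\<lambda>p::'a\<times>'a. G \<bar>(v (fst p) - v (snd p)) / dist (fst p) (snd p) powr s\<bar>) \<in> borel_measurable (lebesgue \<Otimes>\<^sub>M lebesgue)"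
    by (rule orlicz_meas[OF G]) (use v in measurable)
  have eq: "(\<lambda>(x,y). indicator (ball x \<delta>) y * ennreal (G (\<bar>v x - v y\<bar> / dist x y powr s) / dist x y ^ DIM('a)))
     = (\<lambda>p::'a\<times>'a. (if dist (fst p) (snd p) < \<delta> then 1 else 0) * ennreal (G \<bar>(v (fst p) - v (snd p)) / dist (fst p) (snd p) powr s\<bar> / dist (fst p) (snd p) ^ DIM('a)))"
    by (auto simp: fun_eq_iff indicator_def abs_divide)
  show ?thesis unfolding eq using m1 by measurable
qed

lemma H_meas:
  fixes u :: "'a::euclidean_space \<Rightarrow> real"
  assumes G: "orlicz G c" and u: "u \<in> borel_measurable lebesgue"
  shows "(\<lambda>(x,y). ennreal (\<delta> powr (-(1-s)) * G (\<bar>u y\<bar> * \<delta> powr (1 - s))) * (indicator (ball y \<delta>) x * ennreal (dist x y powr ((1-s) - real DIM('a)))))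
     \<in> borel_measurable (lebesgue \<Otimes>\<^sub>M (lebesgue::'a measure))"
proof -
  note idm[measurable]
  have m1: "(\<lambda>y. G \<bar>u y * \<delta> powr (1 - s)\<bar>) \<in> borel_measurable lebesgue"
    by (rule orlicz_meas[OF G]) (use u in measurable)
  have eq: "(\<lambda>(x,y). ennreal (\<delta> powr (-(1-s)) * G (\<bar>u y\<bar> * \<delta> powr (1 - s))) * (indicator (ball y \<delta>) x * ennreal (dist x y powr ((1-s) - real DIM('a)))))
     = (\<lambda>p::'a\<times>'a. ennreal (\<delta> powr (-(1-s)) * G \<bar>u (snd p) * \<delta> powr (1 - s)\<bar>) * ((if dist (fst p) (snd p) < \<delta> then 1 else 0) * ennreal (dist (fst p) (snd p) powr ((1-s) - real DIM('a)))))"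
    by (auto simp: fun_eq_iff indicator_def abs_mult dist_commute)
  show ?thesis unfolding eq using m1 by measurable
qed

lemma ennreal_lin: "0 \<le> a \<Longrightarrow> 0 \<le> B \<Longrightarrow> 0 \<le> C \<Longrightarrow> 0 \<le> Hr \<Longrightarrow>
   ennreal (a * B + C * Hr) = ennreal a * ennreal B + ennreal C * ennreal Hr"
  by (simp add: ennreal_plus ennreal_mult)

theorem lemma2p14:
  fixes u \<eta> :: "'a::euclidean_space \<Rightarrow> real"
    and G :: "real \<Rightarrow> real" and c s \<delta> :: real and k :: nat
  assumes "\<delta> > 0" and "0 < s" and "s < 1"
    and "orlicz G c"
    and "in_LG G u"
    and "smooth_fun \<eta>"
    and "\<forall>x. 0 \<le> \<eta> x \<and> \<eta> x \<le> 1"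
    and "\<forall>x\<in>ball 0 1. \<eta> x = 1"
    and "closure {x. \<eta> x \<noteq> 0} = cball 0 2"
    and "\<forall>x. \<exists>D. (GDERIV \<eta> x :> D) \<and> norm D \<le> 2"
    and "k \<ge> 1"
  shows "Psi s G \<delta> (\<lambda>x. \<eta> (x /\<^sub>R real k) * u x)
     \<le> ennreal (c / 2) * Psi s G \<delta> u
       + ennreal (real DIM('a) * sphere_area TYPE('a) * c^2 / (2 * real k * (1 - s)))
         * (\<integral>\<^sup>+ x. ennreal (G (\<bar>u x\<bar> * \<delta> powr (1 - s))) \<partial>lebesgue)"
proof -
  note d = assms(1) and s = assms(2,3) and G = assms(4)
  define N where "N = real DIM('a)"
  define V where "V = measure lebesgue (ball (0::'a) 1)"
  define uk where "uk = (\<lambda>x. \<eta> (x /\<^sub>R real k) * u x)"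
  define g where "g y = G (\<bar>u y\<bar> * \<delta> powr (1 - s))" for y
  define F where "F v x y = indicator (ball x \<delta>) y * ennreal (G (\<bar>v x - v y\<bar> / dist x y powr s) / dist x y ^ DIM('a))"
    for v :: "'a \<Rightarrow> real" and x y
  define H where "H x y = ennreal (\<delta> powr (-(1-s)) * G (\<bar>u y\<bar> * \<delta> powr (1 - s))) * (indicator (ball y \<delta>) x * ennreal (dist x y powr ((1-s) - real DIM('a))))"
    for x y :: 'a
  define C1 where "C1 = c^2 / (2 * real k)"
  have c2: "c > 2" using orlicz_c[OF G] .
  have k1: "real k \<ge> 1" using assms(11) by simp
  have N1: "N \<ge> 1" unfolding N_def using DIM_positive[where 'a='a] by linarith
  have V0: "V \<ge> 0" unfolding V_def by simp
  have um: "u \<in> borel_measurable lebesgue" using assms(5) unfolding in_LG_def by blast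
  have etac: "continuous_on UNIV \<eta>"
  proof -
    have "isCont \<eta> x" for x
    proof -
      obtain D where "GDERIV \<eta> x :> D" using assms(10) by blast
      then show ?thesis unfolding gderiv_def using has_derivative_continuous by blast
    qed
    then show ?thesis by (simp add: continuous_at_imp_continuous_on)
  qed
  have etakc: "continuous_on UNIV (\<lambda>x::'a. \<eta> (x /\<^sub>R real k))"
    by (rule continuous_on_compose2[OF etac]) (auto intro: continuous_intros)
  have etakm: "(\<lambda>x::'a. \<eta> (x /\<^sub>R real k)) \<in> borel_measurable lebesgue"
  proof -
    have "(\<lambda>x::'a. \<eta> (x /\<^sub>R real k)) \<in> borel_measurable borel"
      using etakc borel_measurable_continuous_onI by blast
    then have "(\<lambda>x::'a. \<eta> (x /\<^sub>R real k)) \<in> borel_measurable lborel" by simp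
    then show ?thesis by (rule measurable_completion)
  qed
  have ukm: "uk \<in> borel_measurable lebesgue" unfolding uk_def using etakm um by measurable
  have Fm: "(\<lambda>(x,y). F v x y) \<in> borel_measurable (lebesgue \<Otimes>\<^sub>M lebesgue)" if "v \<in> borel_measurable lebesgue" for v
    unfolding F_def by (rule F_meas[OF G that])
  have Hm: "(\<lambda>(x,y). H x y) \<in> borel_measurable (lebesgue \<Otimes>\<^sub>M lebesgue)"
    unfolding H_def by (rule H_meas[OF G um])
  have gm: "(\<lambda>y. ennreal (g y)) \<in> borel_measurable lebesgue"
  proof -
    have "(\<lambda>y. G \<bar>u y * \<delta> powr (1 - s)\<bar>) \<in> borel_measurable lebesgue"
      by (rule orlicz_meas[OF G]) (use um in measurable)
    then show ?thesis unfolding g_def by (simp add: abs_mult)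
  qed
  have g0: "g y \<ge> 0" for y unfolding g_def by (rule orlicz_nonneg[OF G]) simp
  have pw: "F uk x y \<le> ennreal (c/2) * F u x y + ennreal C1 * H x y" for x y
  proof (cases "dist x y < \<delta> \<and> x \<noteq> y")
    case False
    have z: "(0::real) ^ DIM('a) = 0" using DIM_positive[where 'a='a] by (simp add: power_0_left)
    from False have "F uk x y = 0" unfolding F_def by (auto simp: indicator_def z)
    then show ?thesis by simp
  next
    case True
    define dd where "dd = dist x y"
    have dd: "0 < dd" "dd < \<delta>" using True unfolding dd_def by auto
    have eb: "0 \<le> \<eta> (x /\<^sub>R real k)" "\<eta> (x /\<^sub>R real k) \<le> 1" using assms(7) by auto
    have dsc: "dist (x /\<^sub>R real k) (y /\<^sub>R real k) = dd / real k"
      unfolding dd_def dist_norm using k1 by (simp add: scaleR_diff_right[symmetric] divide_inverse mult.commute)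
    have ee: "\<bar>\<eta> (x /\<^sub>R real k) - \<eta> (y /\<^sub>R real k)\<bar> \<le> 2 * dd / real k"
      using eta_lip[OF assms(10), of "x /\<^sub>R real k" "y /\<^sub>R real k"] dsc by simp
    have R: "G (\<bar>\<eta> (x /\<^sub>R real k) * u x - \<eta> (y /\<^sub>R real k) * u y\<bar> / dd powr s) / dd ^ DIM('a)
     \<le> c / 2 * (G (\<bar>u x - u y\<bar> / dd powr s) / dd ^ DIM('a))
       + c^2 / (2 * real k) * (\<delta> powr (-(1 - s)) * G (\<bar>u y\<bar> * \<delta> powr (1 - s)) * dd powr ((1 - s) - real DIM('a)))"
      by (rule pw_real[OF G dd s k1 eb ee]) (simp add: Suc_le_eq DIM_positive)
    have B0: "0 \<le> G (\<bar>u x - u y\<bar> / dd powr s) / dd ^ DIM('a)"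
      using orlicz_nonneg[OF G] dd by simp
    have H0: "0 \<le> \<delta> powr (-(1 - s)) * G (\<bar>u y\<bar> * \<delta> powr (1 - s))"
      using orlicz_nonneg[OF G] by simp
    have "F uk x y = ennreal (G (\<bar>\<eta> (x /\<^sub>R real k) * u x - \<eta> (y /\<^sub>R real k) * u y\<bar> / dd powr s) / dd ^ DIM('a))"
      unfolding F_def uk_def dd_def using True by simp
    also have "\<dots> \<le> ennreal (c / 2 * (G (\<bar>u x - u y\<bar> / dd powr s) / dd ^ DIM('a))
       + C1 * (\<delta> powr (-(1 - s)) * G (\<bar>u y\<bar> * \<delta> powr (1 - s)) * dd powr ((1 - s) - real DIM('a))))"
      using R unfolding C1_def by (rule ennreal_leI)
    also have "\<dots> = ennreal (c/2) * F u x y + ennreal C1 * H x y"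
    proof -
      have C10: "C1 \<ge> 0" unfolding C1_def by simp
      define P where "P = \<delta> powr (-(1 - s)) * G (\<bar>u y\<bar> * \<delta> powr (1 - s))"
      define Q where "Q = dd powr ((1 - s) - real DIM('a))"
      have Q0: "Q \<ge> 0" unfolding Q_def by simp
      have "H x y = ennreal P * ennreal Q"
        unfolding H_def P_def Q_def dd_def using True by (simp add: dist_commute)
      also have "\<dots> = ennreal (P * Q)" using H0 Q0 unfolding P_def by (simp add: ennreal_mult)
      finally have Heq: "H x y = ennreal (P * Q)" .
      have Feq: "F u x y = ennreal (G (\<bar>u x - u y\<bar> / dd powr s) / dd ^ DIM('a))"
        unfolding F_def dd_def using True by simp
      have PQ0: "P * Q \<ge> 0" using H0 Q0 unfolding P_def by simp
      show ?thesis unfolding Heq Feq P_def[symmetric] Q_def[symmetric] mult.assoc[symmetric]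
        using ennreal_lin[OF _ B0 C10 PQ0, of "c/2"] c2 by (simp add: mult.assoc)
    qed
    finally show ?thesis .
  qed
  have Psi_eq: "Psi s G \<delta> v = (\<integral>\<^sup>+x. \<integral>\<^sup>+y. F v x y \<partial>lebesgue \<partial>lebesgue)" for v
    unfolding Psi_def F_def ..
  have Fsec: "(\<lambda>y. F v x y) \<in> borel_measurable lebesgue" if "v \<in> borel_measurable lebesgue" for v x
    using measurable_Pair2[OF Fm[OF that], of x] by simp
  have Hsec: "(\<lambda>y. H x y) \<in> borel_measurable lebesgue" for x
    using measurable_Pair2[OF Hm, of x] by simp
  have Fint: "(\<lambda>x. \<integral>\<^sup>+y. F u x y \<partial>lebesgue) \<in> borel_measurable lebesgue"
    by (rule sigma_finite_measure.borel_measurable_nn_integral[OF sigma_finite_lebesgue Fm[OF um]])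
  have Hint: "(\<lambda>x. \<integral>\<^sup>+y. H x y \<partial>lebesgue) \<in> borel_measurable lebesgue"
    by (rule sigma_finite_measure.borel_measurable_nn_integral[OF sigma_finite_lebesgue Hm])
  have "Psi s G \<delta> (\<lambda>x. \<eta> (x /\<^sub>R real k) * u x) = (\<integral>\<^sup>+x. \<integral>\<^sup>+y. F uk x y \<partial>lebesgue \<partial>lebesgue)"
    unfolding uk_def by (rule Psi_eq)
  also have "\<dots> \<le> (\<integral>\<^sup>+x. \<integral>\<^sup>+y. ennreal (c/2) * F u x y + ennreal C1 * H x y \<partial>lebesgue \<partial>lebesgue)"
    by (intro nn_integral_mono pw)
  also have "\<dots> = (\<integral>\<^sup>+x. ennreal (c/2) * (\<integral>\<^sup>+y. F u x y \<partial>lebesgue) + ennreal C1 * (\<integral>\<^sup>+y. H x y \<partial>lebesgue) \<partial>lebesgue)"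
  proof (intro nn_integral_cong)
    fix x :: 'a
    have a: "(\<lambda>y. F u x y) \<in> borel_measurable lebesgue" by (rule Fsec[OF um])
    have b: "(\<lambda>y. H x y) \<in> borel_measurable lebesgue" by (rule Hsec)
    have "(\<integral>\<^sup>+y. ennreal (c/2) * F u x y + ennreal C1 * H x y \<partial>lebesgue)
        = (\<integral>\<^sup>+y. ennreal (c/2) * F u x y \<partial>lebesgue) + (\<integral>\<^sup>+y. ennreal C1 * H x y \<partial>lebesgue)"
      using a b by (intro nn_integral_add) auto
    also have "\<dots> = ennreal (c/2) * (\<integral>\<^sup>+y. F u x y \<partial>lebesgue) + ennreal C1 * (\<integral>\<^sup>+y. H x y \<partial>lebesgue)"
      using a b by (simp add: nn_integral_cmult)
    finally show "(\<integral>\<^sup>+y. ennreal (c/2) * F u x y + ennreal C1 * H x y \<partial>lebesgue)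
        = ennreal (c/2) * (\<integral>\<^sup>+y. F u x y \<partial>lebesgue) + ennreal C1 * (\<integral>\<^sup>+y. H x y \<partial>lebesgue)" .
  qed
  also have "\<dots> = ennreal (c/2) * Psi s G \<delta> u + ennreal C1 * (\<integral>\<^sup>+x. \<integral>\<^sup>+y. H x y \<partial>lebesgue \<partial>lebesgue)"
    unfolding Psi_eq using Fint Hint by (simp add: nn_integral_add nn_integral_cmult)
  also have "(\<integral>\<^sup>+x. \<integral>\<^sup>+y. H x y \<partial>lebesgue \<partial>lebesgue) = (\<integral>\<^sup>+y. \<integral>\<^sup>+x. H x y \<partial>lebesgue \<partial>lebesgue)"
    using pair_sigma_finite.Fubini'[OF pair_sf_leb Hm] by simp
  also have "\<dots> \<le> (\<integral>\<^sup>+y. ennreal (N * V / (1 - s)) * ennreal (g y) \<partial>lebesgue)"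
  proof (rule nn_integral_mono)
    fix y :: 'a
    have im: "(\<lambda>x. indicator (ball y \<delta>) x * ennreal (dist x y powr ((1-s) - real DIM('a)))) \<in> borel_measurable lebesgue"
    proof -
      note idm[measurable]
      have "ball y \<delta> \<in> sets lebesgue" by simp
      then show ?thesis by measurable
    qed
    have P0: "0 \<le> \<delta> powr (-(1-s)) * g y" using g0[of y] by simp
    have "(\<integral>\<^sup>+x. H x y \<partial>lebesgue) = ennreal (\<delta> powr (-(1-s)) * g y) * (\<integral>\<^sup>+x. indicator (ball y \<delta>) x * ennreal (dist x y powr ((1-s) - real DIM('a))) \<partial>lebesgue)"
      unfolding H_def g_def by (rule nn_integral_cmult[OF im])
    also have "\<dots> \<le> ennreal (\<delta> powr (-(1-s)) * g y) * ennreal (real DIM('a) * measure lebesgue (ball (0::'a) 1) * \<delta> powr (1-s) / (1-s))"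
      by (intro mult_left_mono radial) (use s d in auto)
    also have "\<dots> = ennreal (N * V / (1 - s)) * ennreal (g y)"
    proof -
      have "\<delta> powr (-(1-s)) * g y * (real DIM('a) * measure lebesgue (ball (0::'a) 1) * \<delta> powr (1-s) / (1-s))
          = N * V / (1 - s) * g y"
      proof -
        have "\<delta> powr (-(1-s)) * \<delta> powr (1-s) = 1" using d by (simp add: powr_add[symmetric])
        then show ?thesis unfolding N_def V_def by (simp add: field_simps)
      qed
      then show ?thesis using P0 g0[of y] V0 N1 s
        by (simp add: ennreal_mult[symmetric] N_def V_def del: ennreal_mult)
    qed
    finally show "(\<integral>\<^sup>+x. H x y \<partial>lebesgue) \<le> ennreal (N * V / (1 - s)) * ennreal (g y)" .
  qed
  also have "\<dots> = ennreal (N * V / (1 - s)) * (\<integral>\<^sup>+y. ennreal (g y) \<partial>lebesgue)"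
    by (rule nn_integral_cmult[OF gm])
  finally have main: "Psi s G \<delta> (\<lambda>x. \<eta> (x /\<^sub>R real k) * u x)
      \<le> ennreal (c/2) * Psi s G \<delta> u + ennreal C1 * (ennreal (N * V / (1 - s)) * (\<integral>\<^sup>+y. ennreal (g y) \<partial>lebesgue))"
    by (simp add: add_left_mono mult_left_mono)
  have "ennreal C1 * ennreal (N * V / (1 - s)) \<le> ennreal (real DIM('a) * sphere_area TYPE('a) * c^2 / (2 * real k * (1 - s)))"
  proof -
    have "C1 * (N * V / (1 - s)) \<le> N * (N * V) * c^2 / (2 * real k * (1 - s))"
    proof -
      have "C1 * (N * V / (1 - s)) = 1 * (N * V * c^2 / (2 * real k * (1 - s)))"
        unfolding C1_def by (simp add: field_simps)
      also have "\<dots> \<le> N * (N * V * c^2 / (2 * real k * (1 - s)))"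
        using N1 V0 s k1 by (intro mult_right_mono) auto
      finally show ?thesis by (simp add: mult.assoc)
    qed
    moreover have "C1 \<ge> 0" unfolding C1_def by simp
    ultimately show ?thesis using N1 V0 s
      by (simp add: ennreal_mult[symmetric] sphere_area_def N_def V_def ennreal_leI del: ennreal_mult)
  qed
  then have "ennreal C1 * (ennreal (N * V / (1 - s)) * (\<integral>\<^sup>+y. ennreal (g y) \<partial>lebesgue))
      \<le> ennreal (real DIM('a) * sphere_area TYPE('a) * c^2 / (2 * real k * (1 - s))) * (\<integral>\<^sup>+y. ennreal (g y) \<partial>lebesgue)"
    by (simp add: mult.assoc[symmetric] mult_right_mono)
  with main show ?thesis unfolding g_def
    by (meson add_left_mono order_trans)
qed
end
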